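(* Let $(X,r)$ be a square-free non-degenerate symmetric set (of arbitrary cardinality, with $S(X,r)$ embedded in $G(X,r)$) which is not the trivial solution, and suppose its associated symmetric group $(G,r_G)$ satisfies lri. Then (1) for each orbit $X_i$ of the left action of $G$ on $X$, the induced solution on $X_i$ is the trivial solution or a one-element solution; and (2) $\mathrm{mpl}(X,r)=\mathrm{mpl}(G,r_G)=2$.
   Context: A symmetric set is $(X,r)$, $r(x,y)=({}^xy,x^y)$ a non-degenerate, involutive bijection of $X\times X$ with $r^{12}r^{23}r^{12}=r^{23}r^{12}r^{23}$; square-free if $r(x,x)=(x,x)$; trivial if $r(x,y)=(y,x)$. $S(X,r)$, $G(X,r)$: monoid, group generated by $X$ with relations $xy=zt$ whenever $r(x,y)=(z,t)\ne(x,y)$. A symmetric group is $(G,\sigma)$, $\sigma(u,v)=({}^uv,u^v)$ involutive with ${}^a1=1,{}^1u=u,1^u=1,a^1=a$, ${}^{ab}u={}^a({}^bu)$, $a^{uv}=(a^u)^v$, ${}^a(uv)=({}^au)({}^{a^u}v)$, $(ab)^u=(a^{{}^bu})(b^u)$, $uv=({}^uv)(u^v)$; $(G,r_G)$ is $G(X,r)$ with the unique such braiding extending $r$. lri on $(G,r_G)$: $({}^ab)^a=b={}^a(b^a)$ for all $a,b\in G$. Retraction: $x\sim y$ iff ${}^xz={}^yz$ for all $z$, with induced map; $\mathrm{mpl}=m$ iff $m$ minimal with the $m$-fold retraction a one-element set. *)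

theory Defs
  imports "HOL-Algebra.Group"
begin

section \<open>Symmetric sets (X,r); X is the whole type 'a (arbitrary cardinality)\<close>

definition lact :: "('a \<times> 'a \<Rightarrow> 'a \<times> 'a) \<Rightarrow> 'a \<Rightarrow> 'a \<Rightarrow> 'a" where
  "lact r x y = fst (r (x, y))"

definition ract :: "('a \<times> 'a \<Rightarrow> 'a \<times> 'a) \<Rightarrow> 'a \<Rightarrow> 'a \<Rightarrow> 'a" where
  "ract r x y = snd (r (x, y))"

definition r12 :: "('a \<times> 'a \<Rightarrow> 'a \<times> 'a) \<Rightarrow> 'a \<times> 'a \<times> 'a \<Rightarrow> 'a \<times> 'a \<times> 'a" where
  "r12 r t = (case t of (x, y, z) \<Rightarrow> (case r (x, y) of (a, b) \<Rightarrow> (a, b, z)))"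

definition r23 :: "('a \<times> 'a \<Rightarrow> 'a \<times> 'a) \<Rightarrow> 'a \<times> 'a \<times> 'a \<Rightarrow> 'a \<times> 'a \<times> 'a" where
  "r23 r t = (case t of (x, y, z) \<Rightarrow> (case r (y, z) of (b, c) \<Rightarrow> (x, b, c)))"

definition symmetric_set :: "('a \<times> 'a \<Rightarrow> 'a \<times> 'a) \<Rightarrow> bool" where
  "symmetric_set r \<longleftrightarrow>
     bij r \<and> (\<forall>p. r (r p) = p)
     \<and> (\<forall>x. bij (lact r x)) \<and> (\<forall>y. bij (\<lambda>x. ract r x y))
     \<and> r12 r \<circ> r23 r \<circ> r12 r = r23 r \<circ> r12 r \<circ> r23 r"

definition square_free :: "('a \<times> 'a \<Rightarrow> 'a \<times> 'a) \<Rightarrow> bool" where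
  "square_free r \<longleftrightarrow> (\<forall>x. r (x, x) = (x, x))"

definition trivial_sol :: "('a \<times> 'a \<Rightarrow> 'a \<times> 'a) \<Rightarrow> bool" where
  "trivial_sol r \<longleftrightarrow> (\<forall>x y. r (x, y) = (y, x))"

type_synonym 'a word = "('a \<times> bool) list"   (* (x,True) = x, (x,False) = x^-1 *)

inductive eqvG :: "('a \<times> 'a \<Rightarrow> 'a \<times> 'a) \<Rightarrow> 'a word \<Rightarrow> 'a word \<Rightarrow> bool" for r where
  refl: "eqvG r w w"
| sym: "eqvG r u v \<Longrightarrow> eqvG r v u"
| trans: "eqvG r u v \<Longrightarrow> eqvG r v w \<Longrightarrow> eqvG r u w"
| cancel: "eqvG r (u @ [(x, b), (x, \<not> b)] @ v) (u @ v)"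
| rel: "r (x, y) = (z, t) \<Longrightarrow> (z, t) \<noteq> (x, y) \<Longrightarrow>
        eqvG r (u @ [(x, True), (y, True)] @ v) (u @ [(z, True), (t, True)] @ v)"

definition wclass :: "('a \<times> 'a \<Rightarrow> 'a \<times> 'a) \<Rightarrow> 'a word \<Rightarrow> 'a word set" where
  "wclass r w = {v. eqvG r w v}"

definition GX :: "('a \<times> 'a \<Rightarrow> 'a \<times> 'a) \<Rightarrow> 'a word set monoid" where
  "GX r = \<lparr> carrier = range (wclass r),
            mult = (\<lambda>A B. wclass r ((SOME a. a \<in> A) @ (SOME b. b \<in> B))),
            one = wclass r [] \<rparr>"

definition iota :: "('a \<times> 'a \<Rightarrow> 'a \<times> 'a) \<Rightarrow> 'a \<Rightarrow> 'a word set" where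
  "iota r x = wclass r [(x, True)]"

inductive eqvS :: "('a \<times> 'a \<Rightarrow> 'a \<times> 'a) \<Rightarrow> 'a list \<Rightarrow> 'a list \<Rightarrow> bool" for r where
  refl: "eqvS r w w"
| sym: "eqvS r u v \<Longrightarrow> eqvS r v u"
| trans: "eqvS r u v \<Longrightarrow> eqvS r v w \<Longrightarrow> eqvS r u w"
| rel: "r (x, y) = (z, t) \<Longrightarrow> (z, t) \<noteq> (x, y) \<Longrightarrow>
        eqvS r (u @ [x, y] @ v) (u @ [z, t] @ v)"

definition S_embeds :: "('a \<times> 'a \<Rightarrow> 'a \<times> 'a) \<Rightarrow> bool" where
  "S_embeds r \<longleftrightarrow> (\<forall>u v. eqvG r (map (\<lambda>x. (x, True)) u) (map (\<lambda>x. (x, True)) v) \<longrightarrow> eqvS r u v)"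

definition symmetric_group :: "('g, 'b) monoid_scheme \<Rightarrow> ('g \<times> 'g \<Rightarrow> 'g \<times> 'g) \<Rightarrow> bool" where
  "symmetric_group G \<sigma> \<longleftrightarrow> group G \<and>
    (let L = (\<lambda>a u. fst (\<sigma> (a, u))); R = (\<lambda>a u. snd (\<sigma> (a, u))) in
     (\<forall>u\<in>carrier G. \<forall>v\<in>carrier G. L u v \<in> carrier G \<and> R u v \<in> carrier G \<and> \<sigma> (\<sigma> (u, v)) = (u, v))
     \<and> (\<forall>a\<in>carrier G. L a \<one>\<^bsub>G\<^esub> = \<one>\<^bsub>G\<^esub> \<and> L \<one>\<^bsub>G\<^esub> a = a \<and> R \<one>\<^bsub>G\<^esub> a = \<one>\<^bsub>G\<^esub> \<and> R a \<one>\<^bsub>G\<^esub> = a)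
     \<and> (\<forall>a\<in>carrier G. \<forall>b\<in>carrier G. \<forall>u\<in>carrier G. \<forall>v\<in>carrier G.
          L (a \<otimes>\<^bsub>G\<^esub> b) u = L a (L b u)
        \<and> R a (u \<otimes>\<^bsub>G\<^esub> v) = R (R a u) v
        \<and> L a (u \<otimes>\<^bsub>G\<^esub> v) = L a u \<otimes>\<^bsub>G\<^esub> L (R a u) v
        \<and> R (a \<otimes>\<^bsub>G\<^esub> b) u = R a (L b u) \<otimes>\<^bsub>G\<^esub> R b u
        \<and> u \<otimes>\<^bsub>G\<^esub> v = L u v \<otimes>\<^bsub>G\<^esub> R u v))"

definition lri :: "('g, 'b) monoid_scheme \<Rightarrow> ('g \<times> 'g \<Rightarrow> 'g \<times> 'g) \<Rightarrow> bool" where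
  "lri G \<sigma> \<longleftrightarrow> (\<forall>a\<in>carrier G. \<forall>b\<in>carrier G.
      snd (\<sigma> (fst (\<sigma> (a, b)), a)) = b \<and> fst (\<sigma> (a, snd (\<sigma> (b, a)))) = b)"

text \<open>The m-fold retraction of a solution on carrier A with left action L is represented
  as the quotient of A by the relation ret_rel A L m: the 0-fold retraction is A itself,
  and two elements become identified in the (m+1)-fold retraction iff their classes in the
  m-fold retraction have the same left action on all classes.\<close>

fun ret_rel :: "'b set \<Rightarrow> ('b \<Rightarrow> 'b \<Rightarrow> 'b) \<Rightarrow> nat \<Rightarrow> 'b \<Rightarrow> 'b \<Rightarrow> bool" where
  "ret_rel A L 0 x y = (x = y)"
| "ret_rel A L (Suc k) x y = (\<forall>z\<in>A. ret_rel A L k (L x z) (L y z))"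

definition ret_one_elem :: "'b set \<Rightarrow> ('b \<Rightarrow> 'b \<Rightarrow> 'b) \<Rightarrow> nat \<Rightarrow> bool" where
  "ret_one_elem A L m \<longleftrightarrow> A \<noteq> {} \<and> (\<forall>x\<in>A. \<forall>y\<in>A. ret_rel A L m x y)"

definition mpl_is :: "'b set \<Rightarrow> ('b \<Rightarrow> 'b \<Rightarrow> 'b) \<Rightarrow> nat \<Rightarrow> bool" where
  "mpl_is A L m \<longleftrightarrow> ret_one_elem A L m \<and> (\<forall>k<m. \<not> ret_one_elem A L k)"

definition G_orbit :: "('a \<times> 'a \<Rightarrow> 'a \<times> 'a) \<Rightarrow> ('a word set \<times> 'a word set \<Rightarrow> 'a word set \<times> 'a word set)
                       \<Rightarrow> 'a \<Rightarrow> 'a set" where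
  "G_orbit r \<sigma> x = {y. \<exists>a\<in>carrier (GX r). fst (\<sigma> (a, iota r x)) = iota r y}"

end

theory Submission
  imports Defs
begin


lemma eqvG_cong: "eqvG r u v \<Longrightarrow> eqvG r (p @ u @ q) (p @ v @ q)"
proof (induction rule: eqvG.induct)
  case (refl w) then show ?case by (rule eqvG.refl)
next
  case (sym u v) then show ?case by (blast intro: eqvG.sym)
next
  case (trans u v w) then show ?case by (blast intro: eqvG.trans)
next
  case (cancel u x b v)
  then show ?case using eqvG.cancel[of r "p@u" x b "v@q"] by simp
next
  case (rel x y z t u v)
  then show ?case using eqvG.rel[of r x y z t "p@u" "v@q"] by simp
qed

lemma wclass_eq: "wclass r u = wclass r v \<longleftrightarrow> eqvG r u v"
proof
  assume "wclass r u = wclass r v"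
  then have "v \<in> wclass r u" by (simp add: wclass_def eqvG.refl)
  then show "eqvG r u v" by (simp add: wclass_def)
next
  assume h: "eqvG r u v"
  show "wclass r u = wclass r v"
    unfolding wclass_def using h by (auto intro: eqvG.trans eqvG.sym)
qed

lemma mult_wclass: "wclass r u \<otimes>\<^bsub>GX r\<^esub> wclass r v = wclass r (u @ v)"
proof -
  have ex1: "\<exists>a. a \<in> wclass r u" by (auto simp: wclass_def intro: eqvG.refl)
  have ex2: "\<exists>a. a \<in> wclass r v" by (auto simp: wclass_def intro: eqvG.refl)
  define a where "a = (SOME a. a \<in> wclass r u)"
  define b where "b = (SOME a. a \<in> wclass r v)"
  have ha: "eqvG r u a" using someI_ex[OF ex1] a_def by (simp add: wclass_def)
  have hb: "eqvG r v b" using someI_ex[OF ex2] b_def by (simp add: wclass_def)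
  have "eqvG r (a @ b) (u @ b)" using eqvG_cong[OF eqvG.sym[OF ha], of "[]" b] by simp
  moreover have "eqvG r (u @ b) (u @ v)" using eqvG_cong[OF eqvG.sym[OF hb], of u "[]"] by simp
  ultimately have "eqvG r (a @ b) (u @ v)" by (rule eqvG.trans)
  then have "wclass r (a @ b) = wclass r (u @ v)" by (simp add: wclass_eq)
  then show ?thesis by (simp add: GX_def a_def b_def)
qed

fun inv2 :: "('a \<times> 'a \<Rightarrow> 'a \<times> 'a) \<Rightarrow> 'a list \<Rightarrow> ('a \<times> 'a) set" where
  "inv2 r [x, y] = {(x, y), r (x, y)}"
| "inv2 r _ = {}"

lemma inv2_len: "length w \<noteq> 2 \<Longrightarrow> inv2 r w = {}"
  by (cases "(r, w)" rule: inv2.cases) auto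

lemma eqvS_inv:
  assumes inv: "\<forall>p. r (r p) = p"
  shows "eqvS r u v \<Longrightarrow> length u = length v \<and> inv2 r u = inv2 r v \<and> (length u \<le> 1 \<longrightarrow> u = v)"
proof (induction rule: eqvS.induct)
  case (refl w) then show ?case by blast
next
  case (sym u v) then show ?case by metis
next
  case (trans u v w) then show ?case by metis
next
  case (rel x y z t u v)
  show ?case
  proof (cases "u = [] \<and> v = []")
    case True
    have "r (z, t) = r (r (x, y))" using rel(1) by simp
    then have "r (z, t) = (x, y)" using inv by simp
    then show ?thesis using True rel(1) by (simp add: insert_commute)
  next
    case False
    then have "length (u @ [x, y] @ v) \<noteq> 2" "length (u @ [z, t] @ v) \<noteq> 2" by auto
    then show ?thesis by (simp add: inv2_len)
  qed
qed




locale lriG =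
  fixes r :: "'a \<times> 'a \<Rightarrow> 'a \<times> 'a"
    and \<sigma> :: "'a word set \<times> 'a word set \<Rightarrow> 'a word set \<times> 'a word set"
  assumes ss: "symmetric_set r" and sf: "square_free r" and nt: "\<not> trivial_sol r"
    and emb: "S_embeds r"
    and sg: "symmetric_group (GX r) \<sigma>"
    and gen: "\<forall>x y. \<sigma> (iota r x, iota r y) = (iota r (lact r x y), iota r (ract r x y))"
    and lr: "lri (GX r) \<sigma>"

sublocale lriG \<subseteq> G: group "GX r"
  using sg unfolding symmetric_group_def by simp

context lriG begin

abbreviation C where "C \<equiv> carrier (GX r)"
abbreviation mm (infixl "\<odot>" 70) where "a \<odot> b \<equiv> mult (GX r) a b"
abbreviation one1 ("\<e>") where "\<e> \<equiv> one (GX r)"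
abbreviation iv where "iv a \<equiv> m_inv (GX r) a"
abbreviation io where "io \<equiv> iota r"

definition L where "L a b = fst (\<sigma> (a, b))"
definition R where "R a b = snd (\<sigma> (a, b))"

lemma sgu1:
  "\<forall>u\<in>C. \<forall>v\<in>C. L u v \<in> C \<and> R u v \<in> C \<and> \<sigma> (\<sigma> (u, v)) = (u, v)"
  using sg unfolding symmetric_group_def Let_def L_def R_def by (elim conjE) assumption
lemma sgu2:
  "\<forall>a\<in>C. L a \<e> = \<e> \<and> L \<e> a = a \<and> R \<e> a = \<e> \<and> R a \<e> = a"
  using sg unfolding symmetric_group_def Let_def L_def R_def by (elim conjE) assumption
lemma sgu3:
  "\<forall>a\<in>C. \<forall>b\<in>C. \<forall>u\<in>C. \<forall>v\<in>C.
          L (a \<odot> b) u = L a (L b u)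
        \<and> R a (u \<odot> v) = R (R a u) v
        \<and> L a (u \<odot> v) = L a u \<odot> L (R a u) v
        \<and> R (a \<odot> b) u = R a (L b u) \<odot> R b u
        \<and> u \<odot> v = L u v \<odot> R u v"
  using sg unfolding symmetric_group_def Let_def L_def R_def by (elim conjE) assumption

lemma Lc[simp]: "u \<in> C \<Longrightarrow> v \<in> C \<Longrightarrow> L u v \<in> C" using sgu1 by blast
lemma Rc[simp]: "u \<in> C \<Longrightarrow> v \<in> C \<Longrightarrow> R u v \<in> C" using sgu1 by blast
lemma L1[simp]: "a \<in> C \<Longrightarrow> L a \<e> = \<e>" using sgu2 by blast
lemma L1'[simp]: "a \<in> C \<Longrightarrow> L \<e> a = a" using sgu2 by blast
lemma L_mult: "a \<in> C \<Longrightarrow> b \<in> C \<Longrightarrow> u \<in> C \<Longrightarrow> L (a \<odot> b) u = L a (L b u)"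
  using sgu3[rule_format, of a b u u] by blast
lemma L_dist: "a \<in> C \<Longrightarrow> u \<in> C \<Longrightarrow> v \<in> C \<Longrightarrow> L a (u \<odot> v) = L a u \<odot> L (R a u) v"
  using sgu3[rule_format, of a a u v] by blast
lemma R_dist: "a \<in> C \<Longrightarrow> b \<in> C \<Longrightarrow> u \<in> C \<Longrightarrow> R (a \<odot> b) u = R a (L b u) \<odot> R b u"
  using sgu3[rule_format, of a b u u] by blast
lemma fact: "u \<in> C \<Longrightarrow> v \<in> C \<Longrightarrow> u \<odot> v = L u v \<odot> R u v"
  using sgu3[rule_format, of u u u v] by blast

lemma lri1: "a \<in> C \<Longrightarrow> b \<in> C \<Longrightarrow> R (L a b) a = b"
  unfolding L_def R_def using lr[unfolded lri_def, rule_format, of a b] by blast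
lemma lri2: "a \<in> C \<Longrightarrow> b \<in> C \<Longrightarrow> L a (R b a) = b"
  unfolding L_def R_def using lr[unfolded lri_def, rule_format, of a b] by blast

lemma io_c[simp]: "io x \<in> C" unfolding iota_def GX_def by simp
lemma Lio: "L (io x) (io y) = io (lact r x y)" unfolding L_def using gen by simp
lemma Rio: "R (io x) (io y) = io (ract r x y)" unfolding R_def using gen by simp

lemma L_inv1: "a \<in> C \<Longrightarrow> b \<in> C \<Longrightarrow> L (iv a) (L a b) = b"
  using L_mult[of "iv a" a b] by simp
lemma L_inv2: "a \<in> C \<Longrightarrow> b \<in> C \<Longrightarrow> L a (L (iv a) b) = b"
  using L_mult[of a "iv a" b] by simp
lemma R_L: "u \<in> C \<Longrightarrow> c \<in> C \<Longrightarrow> R u c = L (iv c) u"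
  using lri1[of c "L (iv c) u"] L_inv2[of c u] by simp

lemma inv_r: "r (r p) = p" using ss unfolding symmetric_set_def by blast

lemma io_inj: "io x = io y \<Longrightarrow> x = y"
proof -
  assume "io x = io y"
  then have "eqvG r (map (\<lambda>x. (x, True)) [x]) (map (\<lambda>x. (x, True)) [y])"
    by (simp add: iota_def wclass_eq)
  then have "eqvS r [x] [y]" using emb unfolding S_embeds_def by blast
  then have "length [x] \<le> 1 \<longrightarrow> [x] = [y]" using eqvS_inv[of r "[x]" "[y]"] inv_r by blast
  then show "x = y" by simp
qed

lemma io2: "io a \<odot> io b = io c \<odot> io d \<Longrightarrow> (c, d) = (a, b) \<or> (c, d) = r (a, b)"
proof -
  assume "io a \<odot> io b = io c \<odot> io d"
  then have "wclass r [(a,True),(b,True)] = wclass r [(c,True),(d,True)]"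
    by (simp add: iota_def mult_wclass)
  then have "eqvG r (map (\<lambda>x. (x, True)) [a,b]) (map (\<lambda>x. (x, True)) [c,d])"
    by (simp add: wclass_eq)
  then have "eqvS r [a,b] [c,d]" using emb unfolding S_embeds_def by blast
  then have e: "inv2 r [a,b] = inv2 r [c,d]" using eqvS_inv[of r "[a,b]" "[c,d]"] inv_r by blast
  have "(c, d) \<in> inv2 r [c,d]" by simp
  then have "(c, d) \<in> inv2 r [a,b]" using e by simp
  then show ?thesis by simp
qed

lemma one_w: "\<e> = wclass r []" by (simp add: GX_def)

lemma wc_c[simp]: "wclass r w \<in> C" by (simp add: GX_def)

lemma winv: "wclass r [(x, False)] = iv (io x)"
proof -
  have "wclass r [(x, False)] \<odot> io x = \<e>"
    unfolding iota_def one_w mult_wclass wclass_eq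
    using eqvG.cancel[of r "[]" x False "[]"] by simp
  from G.inv_equality[OF this io_c wc_c] show ?thesis by simp
qed

lemma gen_induct:
  assumes g: "g \<in> C" and one: "Q \<e>" and gi: "\<And>x. Q (io x)" and gn: "\<And>x. Q (iv (io x))"
    and pr: "\<And>a b. a \<in> C \<Longrightarrow> b \<in> C \<Longrightarrow> Q a \<Longrightarrow> Q b \<Longrightarrow> Q (a \<odot> b)"
  shows "Q g"
proof -
  have "\<forall>w. Q (wclass r w)"
  proof
    fix w show "Q (wclass r w)"
    proof (induction w)
      case Nil then show ?case using one by (simp add: one_w)
    next
      case (Cons p w)
      obtain x b where p: "p = (x, b)" by (cases p)
      have e: "wclass r (p # w) = wclass r [p] \<odot> wclass r w" by (simp add: mult_wclass)
      have c1: "wclass r [p] \<in> C" "wclass r w \<in> C" by (auto simp: GX_def)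
      have "Q (wclass r [p])" using gi gn winv p by (cases b) (auto simp: iota_def)
      from pr[OF c1 this Cons.IH] show ?case using e by simp
    qed
  qed
  moreover obtain w where "g = wclass r w" using g by (auto simp: GX_def)
  ultimately show ?thesis by simp
qed

end


context lriG begin

lemma lcan: "a \<in> C \<Longrightarrow> y \<in> C \<Longrightarrow> z \<in> C \<Longrightarrow> a \<odot> y = a \<odot> z \<Longrightarrow> y = z"
  by (metis G.Units_eq G.Units_l_cancel)

lemma sfx: "lact r x x = x" "ract r x x = x"
  using sf unfolding square_free_def lact_def ract_def by auto

lemma Luu: "L (io x) (io x) = io x" by (simp add: Lio sfx)
lemma Ruu: "R (io x) (io x) = io x" by (simp add: Rio sfx)

lemma P1: assumes c: "c \<in> C" shows "L (R (io x) c) (io x) = io x"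
proof -
  define u where "u = io x"
  define a where "a = L u c"
  have uc: "u \<in> C" and ac: "a \<in> C" using c by (auto simp: u_def a_def)
  have "R (a \<odot> u) u = R a (L u u) \<odot> R u u" using R_dist ac uc by blast
  also have "\<dots> = c \<odot> u" using lri1[OF uc c] by (simp add: u_def Luu Ruu a_def)
  finally have 1: "R (a \<odot> u) u = c \<odot> u" .
  have "L u (R (a \<odot> u) u) = a \<odot> u" using lri2 ac uc by simp
  then have "L u (c \<odot> u) = a \<odot> u" using 1 by simp
  moreover have "L u (c \<odot> u) = a \<odot> L (R u c) u" using L_dist[OF uc c uc] by (simp add: a_def)
  ultimately have "a \<odot> L (R u c) u = a \<odot> u" by simp
  from lcan[OF ac _ uc this] show ?thesis using uc c by (simp add: u_def)
qed

lemma P1': assumes g: "g \<in> C" shows "L (L g (io x)) (io x) = io x"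
  using P1[of "iv g" x] R_L[of "io x" "iv g"] g by simp

lemma closure: assumes g: "g \<in> C" shows "\<exists>y. L g (io x) = io y"
proof -
  have "\<forall>x. \<exists>y. L g (io x) = io y"
  proof (rule gen_induct[OF g])
    show "\<forall>x. \<exists>y. L \<e> (io x) = io y" by (simp, blast)
  next
    fix b show "\<forall>x. \<exists>y. L (io b) (io x) = io y" by (simp add: Lio, blast)
  next
    fix b show "\<forall>x. \<exists>y. L (iv (io b)) (io x) = io y"
    proof
      fix x
      obtain z where z: "lact r b z = x" using ss unfolding symmetric_set_def bij_def surj_def by metis
      have "L (iv (io b)) (io x) = L (iv (io b)) (L (io b) (io z))" by (simp add: Lio z)
      also have "\<dots> = io z" using L_inv1 by simp
      finally show "\<exists>y. L (iv (io b)) (io x) = io y" by blast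
    qed
  next
    fix a b assume ab: "a \<in> C" "b \<in> C" and ha: "\<forall>x. \<exists>y. L a (io x) = io y"
      and hb: "\<forall>x. \<exists>y. L b (io x) = io y"
    show "\<forall>x. \<exists>y. L (a \<odot> b) (io x) = io y"
    proof
      fix x
      obtain y where y: "L b (io x) = io y" using hb by blast
      obtain z where z: "L a (io y) = io z" using ha by blast
      show "\<exists>y. L (a \<odot> b) (io x) = io y" using L_mult[OF ab io_c] y z by auto
    qed
  qed
  then show ?thesis by blast
qed

definition orb where "orb x y \<longleftrightarrow> (\<exists>g\<in>C. L g (io x) = io y)"

lemma orb_refl: "orb x x" unfolding orb_def by (rule bexI[of _ \<e>]) auto
lemma orb_sym: "orb x y \<Longrightarrow> orb y x"
  unfolding orb_def by (metis G.inv_closed L_inv1 io_c)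
lemma orb_trans: "orb x y \<Longrightarrow> orb y z \<Longrightarrow> orb x z"
  unfolding orb_def by (metis G.m_closed L_mult io_c)
lemma orb_step: "orb x (lact r b x)" unfolding orb_def using Lio io_c by blast
lemma orb_gen: "g \<in> C \<Longrightarrow> L g (io x) = io y \<Longrightarrow> orb x y" unfolding orb_def by blast

lemma orb_triv: assumes "orb x y" shows "lact r x y = y"
proof -
  obtain g where g: "g \<in> C" "L g (io y) = io x" using orb_sym[OF assms] unfolding orb_def by blast
  have "L (io x) (io y) = io y" using P1'[OF g(1), of y] g(2) by simp
  then show ?thesis by (simp add: Lio io_inj)
qed

lemma orb_triv_r: assumes "orb x y" shows "ract r x y = x"
proof -
  have "lact r y x = x" using orb_triv orb_sym assms by blast
  then have "L (io y) (io x) = io x" by (simp add: Lio)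
  then have "L (iv (io y)) (io x) = io x" using L_inv1[of "io y" "io x"] by simp
  then have "R (io x) (io y) = io x" using R_L by simp
  then show ?thesis by (simp add: Rio io_inj)
qed

lemma r_split: "r p = (lact r (fst p) (snd p), ract r (fst p) (snd p))"
  by (simp add: lact_def ract_def)

lemma orb_r: "orb y z \<Longrightarrow> r (y, z) = (z, y)"
  using r_split[of "(y,z)"] orb_triv orb_triv_r by simp

lemma step2: "lact r (lact r b u) c = lact r u c"
proof -
  define B U Cc where "B = io b" and "U = io u" and "Cc = io c"
  have cs: "B \<in> C" "U \<in> C" "Cc \<in> C" by (auto simp: B_def U_def Cc_def)
  define A where "A = L (L B U) Cc"
  have Ac: "A \<in> C" using cs by (simp add: A_def)
  have "R (A \<odot> B) U = R A (L B U) \<odot> R B U" using R_dist Ac cs by blast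
  also have "\<dots> = Cc \<odot> R B U" using lri1 cs by (simp add: A_def)
  finally have 1: "R (A \<odot> B) U = Cc \<odot> R B U" .
  have "A \<odot> B = L U (R (A \<odot> B) U)" using lri2 Ac cs by simp
  also have "\<dots> = L U Cc \<odot> L (R U Cc) (R B U)" using 1 L_dist cs by simp
  finally have 2: "A \<odot> B = L U Cc \<odot> L (R U Cc) (R B U)" .
  define \<alpha> where "\<alpha> = lact r (lact r b u) c"
  define \<beta> where "\<beta> = lact r (ract r u c) (ract r b u)"
  have "io \<alpha> \<odot> io b = io (lact r u c) \<odot> io \<beta>"
    using 2 by (simp add: A_def B_def U_def Cc_def Lio Rio \<alpha>_def \<beta>_def)
  then have cases: "(lact r u c, \<beta>) = (\<alpha>, b) \<or> (lact r u c, \<beta>) = r (\<alpha>, b)" by (rule io2)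
  show ?thesis
  proof (cases "(lact r u c, \<beta>) = (\<alpha>, b)")
    case True then show ?thesis by (simp add: \<alpha>_def)
  next
    case False
    then have h: "lact r \<alpha> b = lact r u c" "ract r \<alpha> b = \<beta>"
      using cases r_split[of "(\<alpha>, b)"] by auto
    have o1: "orb c \<alpha>" unfolding \<alpha>_def by (rule orb_step)
    have o2: "orb c (lact r u c)" by (rule orb_step)
    have o3: "orb b (lact r \<alpha> b)" by (rule orb_step)
    have obc: "orb b c" using o2 o3 h(1) orb_sym orb_trans by metis
    have oab: "orb \<alpha> b" using o1 obc orb_sym orb_trans by metis
    have e1: "lact r u c = b" using h(1) orb_triv[OF oab] by simp
    have e2: "\<beta> = \<alpha>" using h(2) orb_triv_r[OF oab] by simp
    have rbu: "ract r b u = c"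
    proof -
      have "R B U = R (L U Cc) U" using e1 by (simp add: B_def U_def Cc_def Lio)
      also have "\<dots> = Cc" using lri1 cs by simp
      finally show ?thesis by (simp add: B_def U_def Cc_def Rio io_inj)
    qed
    have ea: "\<alpha> = lact r (ract r u c) c" using e2 rbu by (simp add: \<beta>_def)
    have "L (U \<odot> Cc) Cc = L U (L Cc Cc)" using L_mult cs by blast
    also have "\<dots> = B" using e1 by (simp add: U_def Cc_def B_def Luu Lio)
    finally have x1: "L (U \<odot> Cc) Cc = B" .
    have fU: "U \<odot> Cc = L U Cc \<odot> R U Cc" by (rule fact[OF cs(2,3)])
    have "L (U \<odot> Cc) Cc = L (L U Cc \<odot> R U Cc) Cc" by (simp only: fU)
    also have "\<dots> = L (L U Cc) (L (R U Cc) Cc)" using L_mult cs by simp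
    also have "\<dots> = io (lact r b \<alpha>)" using e1 ea by (simp add: U_def Cc_def Lio Rio)
    also have "\<dots> = io \<alpha>" using orb_triv[OF orb_sym[OF oab]] by simp
    finally have "B = io \<alpha>" using x1 by simp
    then have "b = \<alpha>" by (simp add: B_def io_inj)
    then show ?thesis using e1 by (simp add: \<alpha>_def)
  qed
qed

end


context lriG begin

lemma Qp: assumes g: "g \<in> C" shows "\<forall>x w. L (L g (io x)) (io w) = L (io x) (io w)"
proof (rule gen_induct[OF g])
  show "\<forall>x w. L (L \<e> (io x)) (io w) = L (io x) (io w)" by simp
next
  fix b show "\<forall>x w. L (L (io b) (io x)) (io w) = L (io x) (io w)" by (simp add: Lio step2)
next
  fix b show "\<forall>x w. L (L (iv (io b)) (io x)) (io w) = L (io x) (io w)"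
  proof (intro allI)
    fix x w
    obtain z where z: "lact r b z = x" using ss unfolding symmetric_set_def bij_def surj_def by metis
    have "L (iv (io b)) (io x) = L (iv (io b)) (L (io b) (io z))" by (simp add: Lio z)
    also have "\<dots> = io z" using L_inv1 by simp
    finally have e: "L (iv (io b)) (io x) = io z" .
    show "L (L (iv (io b)) (io x)) (io w) = L (io x) (io w)"
      unfolding e using step2[of b z w] z by (simp add: Lio)
  qed
next
  fix a b assume ab: "a \<in> C" "b \<in> C" and ha: "\<forall>x w. L (L a (io x)) (io w) = L (io x) (io w)"
    and hb: "\<forall>x w. L (L b (io x)) (io w) = L (io x) (io w)"
  show "\<forall>x w. L (L (a \<odot> b) (io x)) (io w) = L (io x) (io w)"
  proof (intro allI)
    fix x w
    obtain y where y: "L b (io x) = io y" using closure[OF ab(2)] by blast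
    have "L (L (a \<odot> b) (io x)) (io w) = L (L a (io y)) (io w)" using L_mult ab y by simp
    also have "\<dots> = L (io y) (io w)" using ha by simp
    also have "\<dots> = L (io x) (io w)" using hb y by metis
    finally show "L (L (a \<odot> b) (io x)) (io w) = L (io x) (io w)" .
  qed
qed

lemma orb_L: "orb x y \<Longrightarrow> L (io y) (io w) = L (io x) (io w)"
  unfolding orb_def using Qp by metis

lemma lemA: assumes a': "a' \<in> C" and v: "v \<in> C" shows "L a' (iv v) = iv (L (L v a') v)"
proof -
  define a where "a = L v a'"
  have ac: "a \<in> C" using a' v by (simp add: a_def)
  have ra: "R a v = a'" using lri1 v a' by (simp add: a_def)
  have h: "L a v \<odot> L a' (iv v) = \<e>"
    using L_dist[OF ac v G.inv_closed[OF v]] ra ac v by simp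
  have c1: "L a v \<in> C" "L a' (iv v) \<in> C" using ac v a' by auto
  have "L a' (iv v) \<odot> L a v = \<e>" using G.inv_comm[OF h c1] .
  from G.inv_equality[OF this c1(1) c1(2)] show ?thesis by (simp add: a_def)
qed

lemma Q: assumes d: "d \<in> C" shows "\<forall>x y. orb x y \<longrightarrow> L (io y) d = L (io x) d"
proof (rule gen_induct[OF d])
  show "\<forall>x y. orb x y \<longrightarrow> L (io y) \<e> = L (io x) \<e>" by simp
next
  fix w show "\<forall>x y. orb x y \<longrightarrow> L (io y) (io w) = L (io x) (io w)" using orb_L by blast
next
  fix w show "\<forall>x y. orb x y \<longrightarrow> L (io y) (iv (io w)) = L (io x) (iv (io w))"
  proof (intro allI impI)
    fix x y assume o: "orb x y"
    have o2: "orb (lact r w x) (lact r w y)"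
      using o orb_step orb_sym orb_trans by metis
    have "L (io y) (iv (io w)) = iv (L (io (lact r w y)) (io w))" using lemA by (simp add: Lio)
    also have "\<dots> = iv (L (io (lact r w x)) (io w))" using orb_L[OF o2] by simp
    also have "\<dots> = L (io x) (iv (io w))" using lemA by (simp add: Lio)
    finally show "L (io y) (iv (io w)) = L (io x) (iv (io w))" .
  qed
next
  fix a b assume ab: "a \<in> C" "b \<in> C" and ha: "\<forall>x y. orb x y \<longrightarrow> L (io y) a = L (io x) a"
    and hb: "\<forall>x y. orb x y \<longrightarrow> L (io y) b = L (io x) b"
  show "\<forall>x y. orb x y \<longrightarrow> L (io y) (a \<odot> b) = L (io x) (a \<odot> b)"
  proof (intro allI impI)
    fix x y assume o: "orb x y"
    obtain y' where y': "L (iv a) (io y) = io y'" using closure ab by blast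
    obtain x' where x': "L (iv a) (io x) = io x'" using closure ab by blast
    have oy: "orb y y'" using orb_gen[OF _ y'] ab by simp
    have ox: "orb x x'" using orb_gen[OF _ x'] ab by simp
    have o': "orb x' y'" using o ox oy orb_sym orb_trans by metis
    have "L (io y) (a \<odot> b) = L (io y) a \<odot> L (io y') b" using L_dist ab R_L y' by simp
    also have "\<dots> = L (io x) a \<odot> L (io x') b" using ha hb o o' by simp
    also have "\<dots> = L (io x) (a \<odot> b)" using L_dist ab R_L x' by simp
    finally show "L (io y) (a \<odot> b) = L (io x) (a \<odot> b)" .
  qed
qed

lemma P: assumes c: "c \<in> C" shows "\<forall>a\<in>C. \<forall>d\<in>C. L (L a c) d = L c d"
proof (rule gen_induct[OF c])
  show "\<forall>a\<in>C. \<forall>d\<in>C. L (L a \<e>) d = L \<e> d" by simp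
next
  fix x show "\<forall>a\<in>C. \<forall>d\<in>C. L (L a (io x)) d = L (io x) d"
  proof (intro ballI)
    fix a d assume a: "a \<in> C" and d: "d \<in> C"
    obtain y where y: "L a (io x) = io y" using closure a by blast
    have "orb x y" using orb_gen[OF a y] .
    then show "L (L a (io x)) d = L (io x) d" using Q[OF d] y by simp
  qed
next
  fix x show "\<forall>a\<in>C. \<forall>d\<in>C. L (L a (iv (io x))) d = L (iv (io x)) d"
  proof (intro ballI)
    fix a d assume a: "a \<in> C" and d: "d \<in> C"
    have g: "L (io x) a \<in> C" using a by simp
    obtain y where y: "L (L (io x) a) (io x) = io y" using closure[OF g] by blast
    have o: "orb x y" using orb_gen[OF g y] .
    have e: "L a (iv (io x)) = iv (io y)" using lemA[OF a io_c] y by simp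
    have dd: "L (iv (io x)) d \<in> C" using d by simp
    have "d = L (io x) (L (iv (io x)) d)" using L_inv2 d by simp
    also have "\<dots> = L (io y) (L (iv (io x)) d)" using Q[OF dd] o by simp
    finally have "L (iv (io y)) d = L (iv (io y)) (L (io y) (L (iv (io x)) d))" by simp
    also have "\<dots> = L (iv (io x)) d" using L_inv1 dd by simp
    finally show "L (L a (iv (io x))) d = L (iv (io x)) d" using e by simp
  qed
next
  fix c1 c2 assume cc: "c1 \<in> C" "c2 \<in> C" and h1: "\<forall>a\<in>C. \<forall>d\<in>C. L (L a c1) d = L c1 d"
    and h2: "\<forall>a\<in>C. \<forall>d\<in>C. L (L a c2) d = L c2 d"
  show "\<forall>a\<in>C. \<forall>d\<in>C. L (L a (c1 \<odot> c2)) d = L (c1 \<odot> c2) d"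
  proof (intro ballI)
    fix a d assume a: "a \<in> C" and d: "d \<in> C"
    have "L (L a (c1 \<odot> c2)) d = L (L a c1 \<odot> L (R a c1) c2) d" using L_dist a cc by simp
    also have "\<dots> = L (L a c1) (L (L (R a c1) c2) d)" using L_mult a cc d by simp
    also have "\<dots> = L (L a c1) (L c2 d)" using h2 a cc d by simp
    also have "\<dots> = L c1 (L c2 d)" using h1 a cc d by simp
    also have "\<dots> = L (c1 \<odot> c2) d" using L_mult cc d by simp
    finally show "L (L a (c1 \<odot> c2)) d = L (c1 \<odot> c2) d" .
  qed
qed

lemma notall: "\<not> (\<forall>x y z. lact r x z = lact r y z)"
proof
  assume h: "\<forall>x y z. lact r x z = lact r y z"
  then have l: "\<And>x z. lact r x z = z" using sfx(1) by metis
  have "\<forall>x y. r (x, y) = (y, x)"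
  proof (intro allI)
    fix x y
    have e1: "r (x, y) = (y, ract r x y)" using r_split[of "(x,y)"] l by simp
    have "r (y, ract r x y) = (ract r x y, ract r y (ract r x y))" using r_split[of "(y, ract r x y)"] l by simp
    then have "ract r x y = x" using inv_r[of "(x,y)"] e1 by simp
    then show "r (x, y) = (y, x)" using e1 by simp
  qed
  then show False using nt unfolding trivial_sol_def by blast
qed

lemma two: "\<exists>x y. x \<noteq> (y::'a)"
proof -
  obtain x y where "r (x, y) \<noteq> (y, x)" using nt unfolding trivial_sol_def by blast
  then show ?thesis using sf unfolding square_free_def by metis
qed

lemma part1: "y \<in> G_orbit r \<sigma> x \<Longrightarrow> z \<in> G_orbit r \<sigma> x \<Longrightarrow> r (y, z) = (z, y)"
proof -
  assume "y \<in> G_orbit r \<sigma> x" "z \<in> G_orbit r \<sigma> x"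
  then have "orb x y" "orb x z" unfolding G_orbit_def orb_def L_def by auto
  then have "orb y z" using orb_sym orb_trans by metis
  then show ?thesis by (rule orb_r)
qed

lemma less2: "(k::nat) < 2 \<Longrightarrow> k = 0 \<or> k = 1" by auto

lemma mplX: "mpl_is UNIV (lact r) 2"
  unfolding mpl_is_def ret_one_elem_def
proof (intro conjI allI impI)
  show "UNIV \<noteq> {}" by simp
  show "\<forall>x\<in>UNIV. \<forall>y\<in>UNIV. ret_rel UNIV (lact r) 2 x y" by (simp add: numeral_2_eq_2 step2)
  fix k :: nat assume "k < 2"
  then have "k = 0 \<or> k = 1" by (rule less2)
  moreover have n0: "\<not> (\<forall>x\<in>UNIV. \<forall>y\<in>UNIV. ret_rel UNIV (lact r) 0 x y)" using two by simp
  moreover have n1: "\<not> (\<forall>x\<in>UNIV. \<forall>y\<in>UNIV. ret_rel UNIV (lact r) 1 x y)" using notall by simp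
  ultimately show "\<not> (UNIV \<noteq> {} \<and> (\<forall>x\<in>UNIV. \<forall>y\<in>UNIV. ret_rel UNIV (lact r) k x y))"
    by (elim disjE) simp_all
qed

lemma mplG: "mpl_is C (\<lambda>a b. fst (\<sigma> (a, b))) 2"
proof -
  have LL: "(\<lambda>a b. fst (\<sigma> (a, b))) = L" by (simp add: L_def fun_eq_iff)
  have ne: "C \<noteq> {}" using io_c by blast
  have r2: "\<forall>x\<in>C. \<forall>y\<in>C. ret_rel C L 2 x y" using P by (simp add: numeral_2_eq_2)
  have n0: "\<not> (\<forall>x\<in>C. \<forall>y\<in>C. ret_rel C L 0 x y)"
  proof
    assume "\<forall>x\<in>C. \<forall>y\<in>C. ret_rel C L 0 x y"
    then have "\<forall>x y. io x = io y" by simp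
    then show False using two io_inj by metis
  qed
  have n1: "\<not> (\<forall>x\<in>C. \<forall>y\<in>C. ret_rel C L 1 x y)"
  proof
    assume "\<forall>x\<in>C. \<forall>y\<in>C. ret_rel C L 1 x y"
    then have "\<forall>x y z. L (io x) (io z) = L (io y) (io z)" by simp
    then have "\<forall>x y z. lact r x z = lact r y z" by (simp add: Lio io_inj)
    then show False using notall by blast
  qed
  show ?thesis unfolding LL mpl_is_def ret_one_elem_def
  proof (intro conjI allI impI)
    show "C \<noteq> {}" by (rule ne)
    show "\<forall>x\<in>C. \<forall>y\<in>C. ret_rel C L 2 x y" by (rule r2)
    fix k :: nat assume "k < 2"
    then have "k = 0 \<or> k = 1" by (rule less2)
    then show "\<not> (C \<noteq> {} \<and> (\<forall>x\<in>C. \<forall>y\<in>C. ret_rel C L k x y))" using n0 n1 by (elim disjE) simp_all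
  qed
qed

end

theorem mainTheorem15:
  fixes r :: "'a \<times> 'a \<Rightarrow> 'a \<times> 'a"
    and \<sigma> :: "'a word set \<times> 'a word set \<Rightarrow> 'a word set \<times> 'a word set"
  assumes "symmetric_set r" and "square_free r" and "\<not> trivial_sol r"
    and "S_embeds r"
    and "symmetric_group (GX r) \<sigma>"
    and "\<forall>x y. \<sigma> (iota r x, iota r y) = (iota r (lact r x y), iota r (ract r x y))"
    and "lri (GX r) \<sigma>"
  shows "(\<forall>x. (\<forall>y\<in>G_orbit r \<sigma> x. \<forall>z\<in>G_orbit r \<sigma> x. r (y, z) = (z, y))
              \<or> (\<exists>y. G_orbit r \<sigma> x = {y}))
       \<and> mpl_is UNIV (lact r) 2
       \<and> mpl_is (carrier (GX r)) (\<lambda>a b. fst (\<sigma> (a, b))) 2"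
proof -
  have I: "lriG r \<sigma>" unfolding lriG_def using assms by blast
  interpret lriG r \<sigma> by (rule I)
  show ?thesis using part1 mplX mplG by blast
qed

end
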